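(* Let $V$ be a finite nonempty set and $f:\{0,1\}^V\to\{0,1\}^V$ be non-expansive. (1) Every subnetwork of $f$ has at most one fixed point if and only if $f$ has no positive-circular subnetwork. (2) Every subnetwork of $f$ has at least one fixed point if and only if $f$ has no negative-circular subnetwork.
   Context: $d$ is the Hamming distance on $\{0,1\}^V$; $f$ is non-expansive if $d(f(x),f(y))\le d(x,y)$ for all $x,y$. For nonempty $I\subseteq V$ and $z\in\{0,1\}^{V\setminus I}$, the subnetwork of $f$ induced by $z$ is $h:\{0,1\}^I\to\{0,1\}^I$ with $h(x|_I)=f(x)|_I$ for all $x$ whose restriction to $V\setminus I$ is $z$ ($f$ is a subnetwork of itself). For a network $g$ on $W$ and $x^{j\alpha}$ the point equal to $x$ except its $j$-component is $\alpha$, the global interaction graph $G(g)$ is the signed digraph on $W$ with a positive (resp. negative) arc from $j$ to $i$ iff $g_i(x^{j1})-g_i(x^{j0})=1$ (resp. $=-1$) for at least one $x$. A cycle is a subgraph with at most one arc between any ordered pair of vertices whose underlying unsigned digraph is a directed cycle; positive (negative) if it has an even (odd) number of negative arcs. $g$ is positive-circular (negative-circular) if $G(g)$ itself is a positive (negative) cycle through all vertices of $W$. *)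

theory Defs
  imports Main
begin

text \<open>Boolean networks. A point of {0,1}^W is encoded as a predicate x :: 'v \<Rightarrow> bool
  that is False outside W (extensional representation); True encodes 1.\<close>

definition conf :: "'v set \<Rightarrow> ('v \<Rightarrow> bool) set" where
  "conf W = {x. \<forall>v. v \<notin> W \<longrightarrow> \<not> x v}"

definition is_network :: "'v set \<Rightarrow> (('v \<Rightarrow> bool) \<Rightarrow> ('v \<Rightarrow> bool)) \<Rightarrow> bool" where
  "is_network W g \<longleftrightarrow> (\<forall>x \<in> conf W. g x \<in> conf W)"

definition hamming :: "'v set \<Rightarrow> ('v \<Rightarrow> bool) \<Rightarrow> ('v \<Rightarrow> bool) \<Rightarrow> nat" where
  "hamming V x y = card {v \<in> V. x v \<noteq> y v}"

definition non_expansive :: "'v set \<Rightarrow> (('v \<Rightarrow> bool) \<Rightarrow> ('v \<Rightarrow> bool)) \<Rightarrow> bool" where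
  "non_expansive V f \<longleftrightarrow>
     (\<forall>x \<in> conf V. \<forall>y \<in> conf V. hamming V (f x) (f y) \<le> hamming V x y)"

text \<open>Subnetwork of f (on V) induced by z \<in> {0,1}^(V-I): the network h on I with
  h(x|_I) = f(x)|_I where x|_(V-I) = z.\<close>
definition subnet ::
  "(('v \<Rightarrow> bool) \<Rightarrow> ('v \<Rightarrow> bool)) \<Rightarrow> 'v set \<Rightarrow> ('v \<Rightarrow> bool) \<Rightarrow> ('v \<Rightarrow> bool) \<Rightarrow> ('v \<Rightarrow> bool)" where
  "subnet f I z = (\<lambda>x. \<lambda>i. i \<in> I \<and> f (\<lambda>v. if v \<in> I then x v else z v) i)"

definition is_subnetwork ::
  "'v set \<Rightarrow> (('v \<Rightarrow> bool) \<Rightarrow> ('v \<Rightarrow> bool)) \<Rightarrow> 'v set \<Rightarrow> (('v \<Rightarrow> bool) \<Rightarrow> ('v \<Rightarrow> bool)) \<Rightarrow> bool" where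
  "is_subnetwork V f I h \<longleftrightarrow>
     I \<subseteq> V \<and> I \<noteq> {} \<and> (\<exists>z \<in> conf (V - I). h = subnet f I z)"

definition fixed_points :: "'v set \<Rightarrow> (('v \<Rightarrow> bool) \<Rightarrow> ('v \<Rightarrow> bool)) \<Rightarrow> ('v \<Rightarrow> bool) set" where
  "fixed_points W g = {x \<in> conf W. g x = x}"

definition pos_arc :: "'v set \<Rightarrow> (('v \<Rightarrow> bool) \<Rightarrow> ('v \<Rightarrow> bool)) \<Rightarrow> 'v \<Rightarrow> 'v \<Rightarrow> bool" where
  "pos_arc W g j i \<longleftrightarrow> j \<in> W \<and> i \<in> W \<and>
     (\<exists>x \<in> conf W. g (x(j := True)) i \<and> \<not> g (x(j := False)) i)"

definition neg_arc :: "'v set \<Rightarrow> (('v \<Rightarrow> bool) \<Rightarrow> ('v \<Rightarrow> bool)) \<Rightarrow> 'v \<Rightarrow> 'v \<Rightarrow> bool" where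
  "neg_arc W g j i \<longleftrightarrow> j \<in> W \<and> i \<in> W \<and>
     (\<exists>x \<in> conf W. \<not> g (x(j := True)) i \<and> g (x(j := False)) i)"

definition graph_is_hamiltonian_cycle :: "'v set \<Rightarrow> (('v \<Rightarrow> bool) \<Rightarrow> ('v \<Rightarrow> bool)) \<Rightarrow> bool" where
  "graph_is_hamiltonian_cycle W g \<longleftrightarrow>
     (\<forall>j i. \<not> (pos_arc W g j i \<and> neg_arc W g j i)) \<and>
     (\<exists>vs. distinct vs \<and> set vs = W \<and>
        {(j, i). pos_arc W g j i \<or> neg_arc W g j i} =
        {(vs ! k, vs ! (Suc k mod length vs)) | k. k < length vs})"

definition positive_circular :: "'v set \<Rightarrow> (('v \<Rightarrow> bool) \<Rightarrow> ('v \<Rightarrow> bool)) \<Rightarrow> bool" where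
  "positive_circular W g \<longleftrightarrow> graph_is_hamiltonian_cycle W g \<and>
     even (card {(j, i). neg_arc W g j i})"

definition negative_circular :: "'v set \<Rightarrow> (('v \<Rightarrow> bool) \<Rightarrow> ('v \<Rightarrow> bool)) \<Rightarrow> bool" where
  "negative_circular W g \<longleftrightarrow> graph_is_hamiltonian_cycle W g \<and>
     odd (card {(j, i). neg_arc W g j i})"

end

theory Submission
  imports Defs
begin


definition mrg :: "'v set \<Rightarrow> ('v \<Rightarrow> bool) \<Rightarrow> ('v \<Rightarrow> bool) \<Rightarrow> ('v \<Rightarrow> bool)" where
  "mrg I x z = (\<lambda>v. if v \<in> I then x v else z v)"

lemma subnet_mrg: "subnet f I z = (\<lambda>x i. i \<in> I \<and> f (mrg I x z) i)"
  by (simp add: subnet_def mrg_def)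

lemma conf_finite: assumes "finite W" shows "finite (conf W)"
proof -
  have "conf W \<subseteq> (\<lambda>S v. v \<in> S) ` Pow W"
  proof
    fix x assume "x \<in> conf W"
    then have "x = (\<lambda>v. v \<in> {v\<in>W. x v})" "{v\<in>W. x v} \<in> Pow W" by (auto simp: conf_def fun_eq_iff)
    then show "x \<in> (\<lambda>S v. v \<in> S) ` Pow W" by blast
  qed
  then show ?thesis using assms finite_subset by blast
qed

lemma conf_upd: "x \<in> conf W \<Longrightarrow> j \<in> W \<Longrightarrow> x(j:=b) \<in> conf W"
  by (auto simp: conf_def)

lemma subnet_conf: "subnet f I z x \<in> conf I"
  by (auto simp: conf_def subnet_def)

lemma subnet_ne:
  assumes fin: "finite V" and sub: "is_subnetwork V f I h" and ne: "non_expansive V f"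
  shows "non_expansive I h"
proof -
  obtain z where IV: "I \<subseteq> V" and z: "z \<in> conf (V - I)" and h: "h = subnet f I z"
    using sub by (auto simp: is_subnetwork_def)
  show ?thesis unfolding non_expansive_def
  proof (intro ballI)
    fix x y assume x: "x \<in> conf I" and y: "y \<in> conf I"
    define x' where "x' = mrg I x z"
    define y' where "y' = mrg I y z"
    have x': "x' \<in> conf V" using x z IV by (auto simp: conf_def x'_def mrg_def)
    have y': "y' \<in> conf V" using y z IV by (auto simp: conf_def y'_def mrg_def)
    have "{i\<in>I. h x i \<noteq> h y i} \<subseteq> {v\<in>V. f x' v \<noteq> f y' v}"
      using IV by (auto simp: h subnet_mrg x'_def y'_def)
    then have "hamming I (h x) (h y) \<le> hamming V (f x') (f y')"
      unfolding hamming_def by (intro card_mono) (use fin in auto)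
    also have "\<dots> \<le> hamming V x' y'" using ne x' y' by (auto simp: non_expansive_def)
    also have "{v\<in>V. x' v \<noteq> y' v} = {v\<in>I. x v \<noteq> y v}"
      using IV by (auto simp: x'_def y'_def mrg_def)
    then have "hamming V x' y' = hamming I x y" by (simp add: hamming_def)
    finally show "hamming I (h x) (h y) \<le> hamming I x y" .
  qed
qed

lemma subnet_trans:
  assumes sub: "is_subnetwork V f I h" and JI: "J \<subseteq> I" and Jne: "J \<noteq> {}" and w: "w \<in> conf (I - J)"
  shows "is_subnetwork V f J (subnet h J w)"
proof -
  obtain z where IV: "I \<subseteq> V" and z: "z \<in> conf (V - I)" and h: "h = subnet f I z"
    using sub by (auto simp: is_subnetwork_def)
  define z' where "z' = mrg I w z"
  have z': "z' \<in> conf (V - J)" using z w JI IV by (auto simp: conf_def z'_def mrg_def)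
  have m: "\<And>x. mrg I (mrg J x w) z = mrg J x z'"
    using JI by (auto simp: z'_def mrg_def fun_eq_iff)
  have "subnet h J w = subnet f J z'"
    using JI by (auto simp: h subnet_mrg m fun_eq_iff)
  then show ?thesis using z' JI IV Jne by (auto simp: is_subnetwork_def)
qed



lemma core:
  fixes D :: "'v set" and g :: "('v \<Rightarrow> bool) \<Rightarrow> ('v \<Rightarrow> bool)"
  assumes fin: "finite D" and net: "\<forall>u\<in>conf D. g u \<in> conf D" and ne: "non_expansive D g"
    and xc: "x \<in> conf D" and zc: "z \<in> conf D" and comp: "\<forall>v\<in>D. x v \<noteq> z v" and Dne: "D \<noteq> {}"
    and fp: "fixed_points D g = {x, z}"
  shows "\<exists>\<sigma>. \<sigma> ` D = D \<and> inj_on \<sigma> D \<and>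
     (\<exists>vs. distinct vs \<and> set vs = D \<and>
        {(vs!k, vs!(Suc k mod length vs)) | k. k < length vs} = {(j, \<sigma> j) | j. j \<in> D}) \<and>
     (\<forall>u\<in>conf D. \<forall>j\<in>D. g u (\<sigma> j) = (u j = (x j = x (\<sigma> j))))"
proof -
  define Dx where "Dx u = {v\<in>D. u v \<noteq> x v}" for u
  have DxD: "Dx u \<subseteq> D" for u by (auto simp: Dx_def)
  have finDx: "finite (Dx u)" for u using fin DxD finite_subset by blast
  have hx: "hamming D u x = card (Dx u)" for u by (simp add: hamming_def Dx_def)
  have gx: "g x = x" "g z = z" using fp by (auto simp: fixed_points_def)
  have sumc: "hamming D u x + hamming D u z = card D" for u
  proof -
    have "{v\<in>D. u v \<noteq> z v} = D - Dx u" using comp by (auto simp: Dx_def)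
    then have "hamming D u z = card D - card (Dx u)"
      by (simp add: hamming_def card_Diff_subset[OF finDx DxD])
    moreover have "card (Dx u) \<le> card D" using card_mono[OF fin DxD] .
    ultimately show ?thesis using hx by simp
  qed
  have pres: "card (Dx (g u)) = card (Dx u)" if "u \<in> conf D" for u
  proof -
    have "hamming D (g u) (g x) \<le> hamming D u x" "hamming D (g u) (g z) \<le> hamming D u z"
      using ne that xc zc by (auto simp: non_expansive_def)
    then have "hamming D (g u) x \<le> hamming D u x" "hamming D (g u) z \<le> hamming D u z"
      using gx by auto
    then show ?thesis using sumc[of u] sumc[of "g u"] hx[of u] hx[of "g u"] by linarith
  qed
  have flipc: "x(j := \<not> x j) \<in> conf D" if "j \<in> D" for j using conf_upd[OF xc that] .
  have Dxflip: "Dx (x(j := \<not> x j)) = {j}" if "j \<in> D" for j using that by (auto simp: Dx_def)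
  have sig: "\<exists>k. k \<in> D \<and> Dx (g (x(j := \<not> x j))) = {k}" if "j \<in> D" for j
  proof -
    have "card (Dx (g (x(j := \<not> x j)))) = 1" using pres[OF flipc[OF that]] Dxflip[OF that] by simp
    then obtain k where "Dx (g (x(j := \<not> x j))) = {k}" by (auto simp: card_1_singleton_iff)
    then show ?thesis using DxD by blast
  qed
  define \<sigma> where "\<sigma> j = (SOME k. k \<in> D \<and> Dx (g (x(j := \<not> x j))) = {k})" for j
  have \<sigma>: "\<sigma> j \<in> D \<and> Dx (g (x(j := \<not> x j))) = {\<sigma> j}" if "j \<in> D" for j
    unfolding \<sigma>_def using someI_ex[OF sig[OF that]] .
  have step3: "\<sigma> j \<in> Dx (g u)" if u: "u \<in> conf D" and j: "j \<in> Dx u" for u j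
  proof (rule ccontr)
    assume nin: "\<sigma> j \<notin> Dx (g u)"
    have jD: "j \<in> D" using j DxD by blast
    define xj where "xj = x(j := \<not> x j)"
    have xjc: "xj \<in> conf D" using flipc[OF jD] by (simp add: xj_def)
    have gxj: "g xj v = (if v = \<sigma> j then \<not> x v else x v)" if "v \<in> D" for v
      using \<sigma>[OF jD] that by (auto simp: Dx_def xj_def set_eq_iff)
    have "insert (\<sigma> j) (Dx (g u)) \<subseteq> {v\<in>D. g u v \<noteq> g xj v}"
    proof
      fix v assume v: "v \<in> insert (\<sigma> j) (Dx (g u))"
      then have vD: "v \<in> D" using \<sigma>[OF jD] DxD by blast
      show "v \<in> {v\<in>D. g u v \<noteq> g xj v}"
      proof (cases "v = \<sigma> j")
        case True
        then show ?thesis using nin vD gxj[OF vD] by (simp add: Dx_def)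
      next
        case False
        then show ?thesis using v vD gxj[OF vD] by (simp add: Dx_def)
      qed
    qed
    then have "card (insert (\<sigma> j) (Dx (g u))) \<le> hamming D (g u) (g xj)"
      unfolding hamming_def by (intro card_mono) (use fin in auto)
    also have "\<dots> \<le> hamming D u xj" using ne u xjc by (auto simp: non_expansive_def)
    also have "{v\<in>D. u v \<noteq> xj v} = Dx u - {j}" using j by (auto simp: Dx_def xj_def)
    then have "hamming D u xj = card (Dx u) - 1" using j finDx by (simp add: hamming_def)
    finally have "card (Dx (g u)) + 1 \<le> card (Dx u) - 1" using nin finDx by simp
    moreover have "card (Dx u) > 0" using j finDx card_gt_0_iff by blast
    ultimately show False using pres[OF u] by linarith
  qed
  have closed: "J = D" if JD: "J \<subseteq> D" and sJ: "\<sigma> ` J = J" and Jne: "J \<noteq> {}" for J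
  proof -
    define y where "y = (\<lambda>v. if v \<in> J then \<not> x v else x v)"
    have yc: "y \<in> conf D" using xc JD by (auto simp: conf_def y_def)
    have Dxy: "Dx y = J" using JD by (auto simp: Dx_def y_def)
    have sub: "J \<subseteq> Dx (g y)"
    proof
      fix v assume "v \<in> J"
      then obtain j' where "j' \<in> J" "v = \<sigma> j'" using sJ by (metis imageE)
      then show "v \<in> Dx (g y)" using step3[OF yc, of j'] Dxy by simp
    qed
    have cc: "card J = card (Dx (g y))" using pres[OF yc] Dxy by simp
    have "Dx (g y) = J"
      using card_subset_eq[OF finDx sub cc] by simp
    then have gy: "g y = y"
    proof -
      assume e: "Dx (g y) = J"
      have gyc: "g y \<in> conf D" using net yc by blast
      show ?thesis
      proof
        fix v show "g y v = y v"
        proof (cases "v \<in> D")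
          case True
          then have "(g y v \<noteq> x v) = (v \<in> J)" "(y v \<noteq> x v) = (v \<in> J)"
            using e Dxy by (auto simp: Dx_def)
          then show ?thesis by blast
        next
          case False
          then show ?thesis using gyc yc by (simp add: conf_def)
        qed
      qed
    qed
    then have "y \<in> {x, z}" using fp yc by (auto simp: fixed_points_def)
    moreover have "y \<noteq> x" using Jne by (auto simp: y_def fun_eq_iff)
    ultimately have "y = z" by blast
    show ?thesis
    proof
      show "D \<subseteq> J"
      proof
        fix v assume "v \<in> D"
        then have "y v \<noteq> x v" using comp \<open>y = z\<close> by simp
        then show "v \<in> J" by (auto simp: y_def split: if_splits)
      qed
    qed (rule JD)
  qed
  have \<sigma>D: "\<sigma> j \<in> D" if "j \<in> D" for j using \<sigma>[OF that] by blast
  obtain j0 where j0: "j0 \<in> D" using Dne by blast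
  define a where "a k = (\<sigma> ^^ k) j0" for k
  have aD: "a k \<in> D" for k by (induction k) (simp_all add: a_def j0 \<sigma>D)
  have aS: "a (Suc k) = \<sigma> (a k)" for k by (simp add: a_def)
  have "\<not> inj_on a {..card D}"
  proof
    assume "inj_on a {..card D}"
    then have "card (a ` {..card D}) = Suc (card D)" by (simp add: card_image)
    moreover have "card (a ` {..card D}) \<le> card D" using aD by (intro card_mono[OF fin]) auto
    ultimately show False by simp
  qed
  then obtain p0 q0 where "p0 \<noteq> q0" "a p0 = a q0" by (auto simp: inj_on_def)
  then have ex: "\<exists>q. \<exists>p<q. a p = a q" by (metis linorder_neqE_nat)
  obtain q where Q: "\<exists>p<q. a p = a q" and minQ: "\<forall>q'<q. \<not> (\<exists>p<q'. a p = a q')"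
    using exists_least_iff[THEN iffD1, OF ex] by blast
  obtain p where pq: "p < q" "a p = a q" using Q by blast
  have dist: "a k \<noteq> a l" if "k < l" "l < q" for k l using minQ that by blast
  have injA: "inj_on a {p..<q}"
    unfolding inj_on_def by (metis atLeastLessThan_iff dist linorder_neqE_nat)
  define J where "J = a ` {p..<q}"
  have sJ: "\<sigma> ` J = J"
  proof
    show "\<sigma> ` J \<subseteq> J"
    proof
      fix v assume "v \<in> \<sigma> ` J"
      then obtain k where k: "k \<in> {p..<q}" "v = a (Suc k)" by (auto simp: J_def aS)
      show "v \<in> J"
      proof (cases "Suc k < q")
        case True then show ?thesis using k by (auto simp: J_def)
      next
        case False then have "Suc k = q" using k by auto
        then have "v = a p" "p \<in> {p..<q}" using k pq by auto
        then show ?thesis by (auto simp: J_def)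
      qed
    qed
  next
    show "J \<subseteq> \<sigma> ` J"
    proof
      fix v assume "v \<in> J"
      then obtain k where k: "k \<in> {p..<q}" "v = a k" by (auto simp: J_def)
      show "v \<in> \<sigma> ` J"
      proof (cases "k = p")
        case True
        then have "v = \<sigma> (a (q - 1))" "q - 1 \<in> {p..<q}" using k pq aS[of "q - 1"] by auto
        then show ?thesis by (auto simp: J_def)
      next
        case False
        then have "v = \<sigma> (a (k - 1))" "k - 1 \<in> {p..<q}" using k aS[of "k - 1"] by auto
        then show ?thesis by (auto simp: J_def)
      qed
    qed
  qed
  have JD: "J = D" using closed[OF _ sJ] aD pq by (auto simp: J_def)
  define vs where "vs = map a [p..<q]"
  have dvs: "distinct vs" by (simp add: vs_def distinct_map injA)
  have svs: "set vs = D" using JD by (simp add: vs_def J_def)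
  have lvs: "length vs = q - p" by (simp add: vs_def)
  have nvs: "vs ! k = a (p + k)" if "k < length vs" for k using that by (simp add: vs_def)
  have e: "vs ! (Suc k mod length vs) = \<sigma> (vs ! k)" if k: "k < length vs" for k
  proof (cases "Suc k < length vs")
    case True then show ?thesis using nvs k aS by simp
  next
    case False
    then have "Suc k = length vs" using k by simp
    then have "Suc k mod length vs = 0" "p + Suc k = q" using lvs pq by auto
    moreover have "vs \<noteq> []" using k by auto
    ultimately show ?thesis using nvs[of 0] nvs[OF k] aS[of "p + k"] pq k by simp
  qed
  have edges: "{(vs!k, vs!(Suc k mod length vs)) | k. k < length vs} = {(j, \<sigma> j) | j. j \<in> D}"
    using e svs[symmetric] by (auto simp: in_set_conv_nth)
  have sD: "\<sigma> ` D = D" using sJ JD by simp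
  have injS: "inj_on \<sigma> D" by (rule eq_card_imp_inj_on[OF fin]) (simp add: sD)
  have formula: "g u (\<sigma> j) = (u j = (x j = x (\<sigma> j)))" if u: "u \<in> conf D" and j: "j \<in> D" for u j
  proof -
    have sub: "\<sigma> ` Dx u \<subseteq> Dx (g u)" using step3[OF u] by blast
    have "card (\<sigma> ` Dx u) = card (Dx u)" using card_image[OF inj_on_subset[OF injS DxD]] .
    then have cc: "card (\<sigma> ` Dx u) = card (Dx (g u))" using pres[OF u] by simp
    have eq: "Dx (g u) = \<sigma> ` Dx u" using card_subset_eq[OF finDx sub cc] by simp
    have "(g u (\<sigma> j) \<noteq> x (\<sigma> j)) = (\<sigma> j \<in> Dx (g u))" using \<sigma>D[OF j] by (simp add: Dx_def)
    also have "\<dots> = (j \<in> Dx u)" using eq inj_on_image_mem_iff[OF injS j DxD] by simp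
    also have "\<dots> = (u j \<noteq> x j)" using j by (simp add: Dx_def)
    finally show ?thesis by blast
  qed
  show ?thesis using sD injS dvs svs edges formula by blast
qed



lemma parity:
  fixes x :: "'v \<Rightarrow> bool"
  assumes fin: "finite D" and sD: "\<sigma> ` D = D" and inj: "inj_on \<sigma> D"
  shows "even (card {j\<in>D. \<not> (x j = x (\<sigma> j))})"
proof -
  define A where "A = {j\<in>D. x j \<and> \<not> x (\<sigma> j)}"
  define B where "B = {j\<in>D. \<not> x j \<and> x (\<sigma> j)}"
  define C where "C = {j\<in>D. x j \<and> x (\<sigma> j)}"
  have fA: "finite A" "finite B" "finite C" using fin by (auto simp: A_def B_def C_def)
  have "{j\<in>D. \<not> (x j = x (\<sigma> j))} = A \<union> B" by (auto simp: A_def B_def)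
  moreover have "A \<inter> B = {}" by (auto simp: A_def B_def)
  ultimately have c1: "card {j\<in>D. \<not> (x j = x (\<sigma> j))} = card A + card B"
    using fA card_Un_disjoint by metis
  have "{j\<in>D. x j} = C \<union> A" "C \<inter> A = {}" by (auto simp: A_def C_def)
  then have c2: "card {j\<in>D. x j} = card C + card A" using fA card_Un_disjoint by metis
  have "{j\<in>D. x (\<sigma> j)} = C \<union> B" "C \<inter> B = {}" by (auto simp: B_def C_def)
  then have c3: "card {j\<in>D. x (\<sigma> j)} = card C + card B" using fA card_Un_disjoint by metis
  have "\<sigma> ` {j\<in>D. x (\<sigma> j)} = {i\<in>D. x i}" using sD by auto
  moreover have "inj_on \<sigma> {j\<in>D. x (\<sigma> j)}" using inj_on_subset[OF inj] by auto
  ultimately have "card {j\<in>D. x (\<sigma> j)} = card {i\<in>D. x i}" by (metis card_image)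
  then have "card A = card B" using c2 c3 by simp
  then show ?thesis using c1 by simp
qed

lemma circ:
  assumes sD: "\<sigma> ` D = D" and inj: "inj_on \<sigma> D"
    and dvs: "distinct vs" and svs: "set vs = D"
    and edges: "{(vs!k, vs!(Suc k mod length vs)) | k. k < length vs} = {(j, \<sigma> j) | j. j \<in> D}"
    and form: "\<forall>u\<in>conf D. \<forall>j\<in>D. g u (\<sigma> j) = (u j = s j)"
  shows "graph_is_hamiltonian_cycle D g \<and> card {(j, i). neg_arc D g j i} = card {j\<in>D. \<not> s j}"
proof -
  have zc: "(\<lambda>_. False)(j := b) \<in> conf D" if "j \<in> D" for j b using that by (auto simp: conf_def)
  have arc: "g (x(j := True)) i \<noteq> g (x(j := False)) i \<Longrightarrow> x \<in> conf D \<Longrightarrow> j \<in> D \<Longrightarrow> i \<in> D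
      \<Longrightarrow> i = \<sigma> j \<and> g (x(j := True)) i = s j \<and> g (x(j := False)) i = (\<not> s j)" for x j i
  proof -
    assume ne: "g (x(j := True)) i \<noteq> g (x(j := False)) i" and x: "x \<in> conf D" and j: "j \<in> D" and i: "i \<in> D"
    obtain j' where j': "j' \<in> D" "i = \<sigma> j'" using i sD by blast
    have c1: "x(j := True) \<in> conf D" "x(j := False) \<in> conf D" using x j by (auto simp: conf_upd)
    have "g (x(j := True)) i = ((x(j := True)) j' = s j')" "g (x(j := False)) i = ((x(j := False)) j' = s j')"
      using form c1 j' by auto
    then show ?thesis using ne j' by (cases "j' = j") auto
  qed
  have pa: "pos_arc D g j i \<longleftrightarrow> (j \<in> D \<and> i = \<sigma> j \<and> s j)" for j i
  proof
    assume "pos_arc D g j i"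
    then obtain x where "j \<in> D" "i \<in> D" "x \<in> conf D" "g (x(j := True)) i" "\<not> g (x(j := False)) i"
      by (auto simp: pos_arc_def)
    then show "j \<in> D \<and> i = \<sigma> j \<and> s j" using arc[of x j i] by auto
  next
    assume a: "j \<in> D \<and> i = \<sigma> j \<and> s j"
    have "(\<lambda>_. False) \<in> conf D" by (simp add: conf_def)
    moreover have "g ((\<lambda>_. False)(j := True)) i" "\<not> g ((\<lambda>_. False)(j := False)) i"
      using form zc a by auto
    moreover have "i \<in> D" using a sD by blast
    ultimately show "pos_arc D g j i" using a by (auto simp: pos_arc_def)
  qed
  have na: "neg_arc D g j i \<longleftrightarrow> (j \<in> D \<and> i = \<sigma> j \<and> \<not> s j)" for j i
  proof
    assume "neg_arc D g j i"
    then obtain x where "j \<in> D" "i \<in> D" "x \<in> conf D" "\<not> g (x(j := True)) i" "g (x(j := False)) i"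
      by (auto simp: neg_arc_def)
    then show "j \<in> D \<and> i = \<sigma> j \<and> \<not> s j" using arc[of x j i] by auto
  next
    assume a: "j \<in> D \<and> i = \<sigma> j \<and> \<not> s j"
    have "(\<lambda>_. False) \<in> conf D" by (simp add: conf_def)
    moreover have "\<not> g ((\<lambda>_. False)(j := True)) i" "g ((\<lambda>_. False)(j := False)) i"
      using form zc a by auto
    moreover have "i \<in> D" using a sD by blast
    ultimately show "neg_arc D g j i" using a by (auto simp: neg_arc_def)
  qed
  have "{(j, i). pos_arc D g j i \<or> neg_arc D g j i} = {(j, \<sigma> j) | j. j \<in> D}"
    using pa na by auto
  then have e2: "{(j, i). pos_arc D g j i \<or> neg_arc D g j i} = {(vs!k, vs!(Suc k mod length vs)) | k. k < length vs}"
    using edges by simp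
  have nb: "\<forall>j i. \<not> (pos_arc D g j i \<and> neg_arc D g j i)" using pa na by blast
  have hc: "graph_is_hamiltonian_cycle D g"
    unfolding graph_is_hamiltonian_cycle_def using nb dvs svs e2 by blast
  have "{(j, i). neg_arc D g j i} = (\<lambda>j. (j, \<sigma> j)) ` {j\<in>D. \<not> s j}" using na by auto
  moreover have "inj_on (\<lambda>j. (j, \<sigma> j)) {j\<in>D. \<not> s j}" by (auto simp: inj_on_def)
  ultimately have "card {(j, i). neg_arc D g j i} = card {j\<in>D. \<not> s j}" by (simp add: card_image)
  then show ?thesis using hc by blast
qed



lemma indep:
  assumes fin: "finite W"
    and H: "\<forall>x\<in>conf W. \<forall>j\<in>W - S. h (x(j := True)) i = h (x(j := False)) i"
  shows "x \<in> conf W \<Longrightarrow> y \<in> conf W \<Longrightarrow> \<forall>v\<in>S. x v = y v \<Longrightarrow> h x i = h y i"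
proof (induction "card {v\<in>W. x v \<noteq> y v}" arbitrary: x)
  case 0
  then have "{v\<in>W. x v \<noteq> y v} = {}" using fin by simp
  then have "x = y" using "0.prems"(1,2) by (auto simp: conf_def fun_eq_iff)
  then show ?case by simp
next
  case (Suc n)
  then obtain j where j: "j \<in> W" "x j \<noteq> y j" by (metis (mono_tags, lifting) Collect_empty_eq card.empty nat.distinct(1))
  then have jS: "j \<in> W - S" using Suc.prems(3) by auto
  define x' where "x' = x(j := y j)"
  have x'c: "x' \<in> conf W" using conf_upd[OF Suc.prems(1) j(1)] by (simp add: x'_def)
  have "{v\<in>W. x' v \<noteq> y v} = {v\<in>W. x v \<noteq> y v} - {j}" using j by (auto simp: x'_def)
  then have "n = card {v\<in>W. x' v \<noteq> y v}" using Suc.hyps(2) j fin by simp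
  moreover have "\<forall>v\<in>S. x' v = y v" using Suc.prems(3) by (auto simp: x'_def)
  ultimately have "h x' i = h y i" using Suc.hyps(1) x'c Suc.prems(2) by blast
  moreover have "h x i = h x' i"
  proof -
    have "h (x(j := True)) i = h (x(j := False)) i" using H Suc.prems(1) jS by blast
    then have b: "h (x(j := b)) i = h (x(j := True)) i" for b by (cases b) auto
    have "h x i = h (x(j := x j)) i" by simp
    also have "\<dots> = h (x(j := y j)) i" using b[of "x j"] b[of "y j"] by simp
    finally show ?thesis unfolding x'_def .
  qed
  ultimately show ?case by simp
qed

lemma suc_mod_inj: "k < n \<Longrightarrow> k' < n \<Longrightarrow> Suc k mod n = Suc k' mod n \<Longrightarrow> k = k'"
  by (metis Suc_lessI mod_less mod_self nat.distinct(1) nat.inject)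

lemma suc_mod_surj: "m < n \<Longrightarrow> \<exists>k<n. Suc k mod n = m"
proof (cases m)
  case 0 assume "m < n" then show ?thesis using 0 by (intro exI[of _ "n - 1"]) auto
next
  case (Suc m') assume "m < n" then show ?thesis using Suc by (intro exI[of _ m']) auto
qed

lemma cyc_struct:
  assumes fin: "finite I" and hc: "graph_is_hamiltonian_cycle I h"
  shows "\<exists>vs s. distinct vs \<and> set vs = I \<and>
     (\<forall>y\<in>conf I. \<forall>k<length vs. h y (vs!(Suc k mod length vs)) = (y (vs!k) = s k)) \<and>
     card {(j, i). neg_arc I h j i} = card {k. k < length vs \<and> \<not> s k}"
proof -
  obtain vs where nb: "\<forall>j i. \<not> (pos_arc I h j i \<and> neg_arc I h j i)" and dvs: "distinct vs"
    and svs: "set vs = I"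
    and E: "{(j, i). pos_arc I h j i \<or> neg_arc I h j i} = {(vs!k, vs!(Suc k mod length vs)) | k. k < length vs}"
    using hc unfolding graph_is_hamiltonian_cycle_def by blast
  define n where "n = length vs"
  define s where "s k = pos_arc I h (vs!k) (vs!(Suc k mod n))" for k
  have inI: "vs!k \<in> I" "vs!(Suc k mod n) \<in> I" if "k < n" for k
    using that svs by (auto simp: n_def intro!: nth_mem mod_less_divisor)
  have arcE: "\<exists>k<n. j = vs!k \<and> i = vs!(Suc k mod n)" if "pos_arc I h j i \<or> neg_arc I h j i" for j i
  proof -
    have "(j, i) \<in> {(j, i). pos_arc I h j i \<or> neg_arc I h j i}" using that by simp
    then show ?thesis unfolding E n_def by blast
  qed
  have edge: "pos_arc I h (vs!k) (vs!(Suc k mod n)) \<or> neg_arc I h (vs!k) (vs!(Suc k mod n))" if "k < n" for k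
  proof -
    have "(vs!k, vs!(Suc k mod n)) \<in> {(j, i). pos_arc I h j i \<or> neg_arc I h j i}"
      unfolding E n_def using that n_def by blast
    then show ?thesis by simp
  qed
  have main: "h y (vs!(Suc k mod n)) = (y (vs!k) = s k)" if y: "y \<in> conf I" and k: "k < n" for y k
  proof -
    define j where "j = vs!k"
    define i where "i = vs!(Suc k mod n)"
    have jI: "j \<in> I" and iI: "i \<in> I" using inI[OF k] by (auto simp: j_def i_def)
    have H: "\<forall>x\<in>conf I. \<forall>j'\<in>I - {j}. h (x(j' := True)) i = h (x(j' := False)) i"
    proof (intro ballI)
      fix x j' assume x: "x \<in> conf I" and j': "j' \<in> I - {j}"
      show "h (x(j' := True)) i = h (x(j' := False)) i"
      proof (rule ccontr)
        assume ne: "h (x(j' := True)) i \<noteq> h (x(j' := False)) i"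
        then have "pos_arc I h j' i \<or> neg_arc I h j' i" using x j' iI
          unfolding pos_arc_def neg_arc_def by (cases "h (x(j' := True)) i") auto
        then obtain k' where k': "k' < n" "j' = vs!k'" "i = vs!(Suc k' mod n)" using arcE by blast
        have "n > 0" using k by simp
        then have "Suc k' mod n = Suc k mod n"
          using k' dvs nth_eq_iff_index_eq[OF dvs] by (simp add: i_def n_def)
        then have "k' = k" using suc_mod_inj k k' by blast
        then show False using j' k' by (simp add: j_def)
      qed
    qed
    define e where "e b = (\<lambda>_. False)(j := b)" for b
    have ec: "e b \<in> conf I" for b using jI by (auto simp: e_def conf_def)
    have dep: "h u i = h (e (u j)) i" if "u \<in> conf I" for u
      using indep[where S="{j}" and h=h and i=i and W=I, OF fin H that ec[of "u j"]] by (simp add: e_def)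
    have t: "h (e True) i = s k \<and> h (e False) i = (\<not> s k)"
    proof (cases "s k")
      case True
      then obtain x where x: "x \<in> conf I" "h (x(j := True)) i" "\<not> h (x(j := False)) i"
        by (auto simp: s_def pos_arc_def j_def i_def)
      have "x(j := True) \<in> conf I" "x(j := False) \<in> conf I" using x jI by (auto simp: conf_upd)
      then show ?thesis using x dep True by force
    next
      case False
      then have "neg_arc I h j i" using edge[OF k] by (simp add: s_def j_def i_def)
      then obtain x where x: "x \<in> conf I" "\<not> h (x(j := True)) i" "h (x(j := False)) i"
        by (auto simp: neg_arc_def)
      have "x(j := True) \<in> conf I" "x(j := False) \<in> conf I" using x jI by (auto simp: conf_upd)
      then show ?thesis using x dep False by force
    qed
    show ?thesis using dep[OF y] t unfolding i_def[symmetric] j_def[symmetric] by (cases "y j") auto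
  qed
  have "{(j, i). neg_arc I h j i} = (\<lambda>k. (vs!k, vs!(Suc k mod n))) ` {k. k < n \<and> \<not> s k}"
  proof
    show "{(j, i). neg_arc I h j i} \<subseteq> (\<lambda>k. (vs!k, vs!(Suc k mod n))) ` {k. k < n \<and> \<not> s k}"
    proof
      fix p assume "p \<in> {(j, i). neg_arc I h j i}"
      then obtain j i where p: "p = (j, i)" "neg_arc I h j i" by blast
      then obtain k where k: "k < n" "j = vs!k" "i = vs!(Suc k mod n)" using arcE by blast
      then have "\<not> s k" using nb p by (auto simp: s_def)
      then show "p \<in> (\<lambda>k. (vs!k, vs!(Suc k mod n))) ` {k. k < n \<and> \<not> s k}" using k p by auto
    qed
  next
    show "(\<lambda>k. (vs!k, vs!(Suc k mod n))) ` {k. k < n \<and> \<not> s k} \<subseteq> {(j, i). neg_arc I h j i}"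
      using edge by (auto simp: s_def)
  qed
  moreover have "inj_on (\<lambda>k. (vs!k, vs!(Suc k mod n))) {k. k < n \<and> \<not> s k}"
    using nth_eq_iff_index_eq[OF dvs] by (auto simp: inj_on_def n_def)
  ultimately have "card {(j, i). neg_arc I h j i} = card {k. k < n \<and> \<not> s k}" by (simp add: card_image)
  then show ?thesis using dvs svs main unfolding n_def by blast
qed

lemma tS_lemma:
  "(b = even (card {m. m < Suc k \<and> \<not> s m})) = ((b = even (card {m. m < k \<and> \<not> s m})) = s k)"
proof (cases "s k")
  case True
  then have "{m. m < Suc k \<and> \<not> s m} = {m. m < k \<and> \<not> s m}" by (auto simp: less_Suc_eq)
  then show ?thesis using True by simp
next
  case False
  then have "{m. m < Suc k \<and> \<not> s m} = insert k {m. m < k \<and> \<not> s m}" by (auto simp: less_Suc_eq)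
  moreover have "finite {m. m < k \<and> \<not> s m}" by simp
  ultimately have "card {m. m < Suc k \<and> \<not> s m} = Suc (card {m. m < k \<and> \<not> s m})" by simp
  then show ?thesis using False by simp
qed

lemma cyc_fp:
  assumes dvs: "distinct vs" and svs: "set vs = I" and ne: "vs \<noteq> []"
    and net: "\<forall>y\<in>conf I. h y \<in> conf I"
    and form: "\<forall>y\<in>conf I. \<forall>k<length vs. h y (vs!(Suc k mod length vs)) = (y (vs!k) = s k)"
  shows "even (card {k. k < length vs \<and> \<not> s k}) \<Longrightarrow> \<exists>a b. a \<in> fixed_points I h \<and> b \<in> fixed_points I h \<and> a \<noteq> b"
    and "odd (card {k. k < length vs \<and> \<not> s k}) \<Longrightarrow> fixed_points I h = {}"
proof -
  define n where "n = length vs"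
  have n0: "n > 0" using ne by (simp add: n_def)
  define t where "t b k = (b = even (card {m. m < k \<and> \<not> s m}))" for b k
  have tS: "t b (Suc k) = (t b k = s k)" for b k unfolding t_def by (rule tS_lemma)
  have t0: "t b 0 = b" for b by (simp add: t_def)
  {
    assume ev: "even (card {k. k < length vs \<and> \<not> s k})"
    define y where "y b = (\<lambda>v. \<exists>k<n. vs!k = v \<and> t b k)" for b
    have yk: "y b (vs!k) = t b k" if "k < n" for b k
      using that nth_eq_iff_index_eq[OF dvs] by (auto simp: y_def n_def)
    have yc: "y b \<in> conf I" for b using svs by (auto simp: y_def conf_def n_def)
    have fixp: "y b \<in> fixed_points I h" for b
    proof -
      have "h (y b) = y b"
      proof
        fix v show "h (y b) v = y b v"
        proof (cases "v \<in> I")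
          case False
          then show ?thesis using net yc[of b] by (auto simp: conf_def)
        next
          case True
          then obtain m where m: "m < n" "v = vs!m" using svs by (auto simp: in_set_conv_nth n_def)
          then obtain k where k: "k < n" "Suc k mod n = m" using suc_mod_surj by blast
          have "h (y b) (vs!(Suc k mod n)) = (y b (vs!k) = s k)" using form yc[of b] k(1) by (simp add: n_def)
          then have "h (y b) v = (t b k = s k)" using k m yk[OF k(1)] by simp
          also have "\<dots> = t b (Suc k)" by (simp add: tS)
          also have "\<dots> = t b m"
          proof (cases "Suc k < n")
            case True then show ?thesis using k by simp
          next
            case False
            then have sk: "Suc k = n" using k by auto
            then have "m = 0" using k by auto
            then show ?thesis using ev t0 sk by (simp add: t_def n_def)
          qed
          finally show ?thesis using yk[OF m(1)] m by simp
        qed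
      qed
      then show ?thesis using yc by (simp add: fixed_points_def)
    qed
    have "y True \<noteq> y False" using yk[OF n0] t0 by metis
    then show "\<exists>a b. a \<in> fixed_points I h \<and> b \<in> fixed_points I h \<and> a \<noteq> b" using fixp by blast
  }
  {
    assume od: "odd (card {k. k < length vs \<and> \<not> s k})"
    show "fixed_points I h = {}"
    proof (rule ccontr)
      assume "fixed_points I h \<noteq> {}"
      then obtain y where yc: "y \<in> conf I" and hy: "h y = y" by (auto simp: fixed_points_def)
      define b where "b = y (vs!0)"
      have ind: "k < n \<Longrightarrow> y (vs!k) = t b k" for k
      proof (induction k)
        case 0 then show ?case by (simp add: t0 b_def)
      next
        case (Suc k)
        then have "y (vs!Suc k) = h y (vs!(Suc k mod n))" using hy by simp
        also have "\<dots> = (y (vs!k) = s k)" using form yc Suc.prems unfolding n_def by (metis Suc_lessD)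
        also have "\<dots> = t b (Suc k)" using Suc by (simp add: tS)
        finally show ?case .
      qed
      have "y (vs!0) = h y (vs!(Suc (n - 1) mod n))" using hy n0 by simp
      also have "\<dots> = (y (vs!(n - 1)) = s (n - 1))"
        using form yc n0 unfolding n_def by (metis diff_less zero_less_one)
      also have "\<dots> = t b (Suc (n - 1))" using ind[of "n - 1"] n0 tS[of b "n - 1"] by simp
      also have "\<dots> = (\<not> b)" using n0 od by (simp add: t_def n_def)
      finally show False by (simp add: b_def)
    qed
  }
qed



lemma restr:
  assumes sub: "is_subnetwork V f I g" and EI: "E \<subseteq> I" and Ene: "E \<noteq> {}" and xc: "x \<in> conf I"
  shows "is_subnetwork V f E (subnet g E (\<lambda>v. v \<notin> E \<and> x v))"
    and "\<forall>v. v \<notin> E \<longrightarrow> p v = x v \<Longrightarrow>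
         subnet g E (\<lambda>v. v \<notin> E \<and> x v) (\<lambda>v. v \<in> E \<and> p v) = (\<lambda>k. k \<in> E \<and> g p k)"
    and "(\<lambda>v. v \<in> E \<and> p v) \<in> conf E"
proof -
  have "(\<lambda>v. v \<notin> E \<and> x v) \<in> conf (I - E)" using xc by (auto simp: conf_def)
  then show "is_subnetwork V f E (subnet g E (\<lambda>v. v \<notin> E \<and> x v))" using subnet_trans[OF sub EI Ene] by blast
  show "(\<lambda>v. v \<in> E \<and> p v) \<in> conf E" by (simp add: conf_def)
  assume a: "\<forall>v. v \<notin> E \<longrightarrow> p v = x v"
  have "mrg E (\<lambda>v. v \<in> E \<and> p v) (\<lambda>v. v \<notin> E \<and> x v) = p" using a by (auto simp: mrg_def fun_eq_iff)
  then show "subnet g E (\<lambda>v. v \<notin> E \<and> x v) (\<lambda>v. v \<in> E \<and> p v) = (\<lambda>k. k \<in> E \<and> g p k)"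
    by (simp add: subnet_mrg)
qed

lemma flip_eq:
  assumes "u \<in> conf I" "gu \<in> conf I" "i \<in> I" "\<forall>j\<in>I-{i}. gu j = u j" "gu \<noteq> u"
  shows "gu = u(i := \<not> u i)"
proof -
  have "gu i \<noteq> u i"
  proof
    assume "gu i = u i"
    then have "gu = u" using assms(1,2,4) by (auto simp: conf_def fun_eq_iff)
    then show False using assms(5) by simp
  qed
  then show ?thesis using assms(1,2,4) by (auto simp: conf_def fun_eq_iff)
qed

lemma compl_unique:
  assumes "b \<in> conf D" "c \<in> conf D" "\<forall>v\<in>D. a v \<noteq> b v" "\<forall>v\<in>D. a v \<noteq> c v"
  shows "b = c"
proof
  fix v show "b v = c v" using assms by (cases "v \<in> D") (auto simp: conf_def)
qed

lemma conf_eq: "a \<in> conf D \<Longrightarrow> b \<in> conf D \<Longrightarrow> {v\<in>D. a v \<noteq> b v} = {} \<Longrightarrow> a = b"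
  by (auto simp: conf_def fun_eq_iff)

lemma sub_basic:
  assumes fin: "finite V" and sub: "is_subnetwork V f I h"
  shows "finite I" "I \<noteq> {}" "\<forall>y. h y \<in> conf I" "finite (fixed_points I h)"
proof -
  obtain z where IV: "I \<subseteq> V" and Ine: "I \<noteq> {}" and h: "h = subnet f I z"
    using sub unfolding is_subnetwork_def by blast
  show fI: "finite I" using finite_subset[OF IV fin] .
  show "I \<noteq> {}" by (rule Ine)
  show "\<forall>y. h y \<in> conf I" by (simp add: h subnet_conf)
  have "fixed_points I h \<subseteq> conf I" by (auto simp: fixed_points_def)
  then show "finite (fixed_points I h)" using conf_finite[OF fI] finite_subset by blast
qed

lemma pos2:
  assumes fin: "finite V" and sub: "is_subnetwork V f I h" and pc: "positive_circular I h"
  shows "\<not> card (fixed_points I h) \<le> 1"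
proof -
  note b = sub_basic[OF fin sub]
  obtain vs s where v: "distinct vs" "set vs = I"
    "\<forall>y\<in>conf I. \<forall>k<length vs. h y (vs!(Suc k mod length vs)) = (y (vs!k) = s k)"
    "card {(j, i). neg_arc I h j i} = card {k. k < length vs \<and> \<not> s k}"
  proof -
    have "graph_is_hamiltonian_cycle I h" using pc by (simp add: positive_circular_def)
    then show ?thesis using cyc_struct[OF b(1)] that by blast
  qed
  have vne: "vs \<noteq> []" using v b by auto
  have ev: "even (card {k. k < length vs \<and> \<not> s k})" using v(4) pc by (simp add: positive_circular_def)
  have net: "\<forall>y\<in>conf I. h y \<in> conf I" using b(3) by blast
  obtain a c where "a \<in> fixed_points I h" "c \<in> fixed_points I h" "a \<noteq> c"
    using cyc_fp(1)[OF v(1,2) vne net v(3) ev] by blast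
  then show ?thesis using card_le_Suc0_iff_eq[OF b(4)] by auto
qed

lemma neg0:
  assumes fin: "finite V" and sub: "is_subnetwork V f I h" and pc: "negative_circular I h"
  shows "fixed_points I h = {}"
proof -
  note b = sub_basic[OF fin sub]
  obtain vs s where v: "distinct vs" "set vs = I"
    "\<forall>y\<in>conf I. \<forall>k<length vs. h y (vs!(Suc k mod length vs)) = (y (vs!k) = s k)"
    "card {(j, i). neg_arc I h j i} = card {k. k < length vs \<and> \<not> s k}"
  proof -
    have "graph_is_hamiltonian_cycle I h" using pc by (simp add: negative_circular_def)
    then show ?thesis using cyc_struct[OF b(1)] that by blast
  qed
  have vne: "vs \<noteq> []" using v b by auto
  have od: "odd (card {k. k < length vs \<and> \<not> s k})" using v(4) pc by (simp add: negative_circular_def)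
  have net: "\<forall>y\<in>conf I. h y \<in> conf I" using b(3) by blast
  show ?thesis using cyc_fp(2)[OF v(1,2) vne net v(3) od] .
qed

lemma P1:
  assumes fin: "finite V" and ne: "non_expansive V f"
    and ex: "\<exists>I h. is_subnetwork V f I h \<and> \<not> card (fixed_points I h) \<le> 1"
  shows "\<exists>I h. is_subnetwork V f I h \<and> positive_circular I h"
proof -
  define Q where "Q N = (\<exists>I h. is_subnetwork V f I h \<and> card I = N \<and> \<not> card (fixed_points I h) \<le> 1)" for N
  have "\<exists>N. Q N" using ex by (auto simp: Q_def)
  then have "\<exists>N. Q N \<and> (\<forall>M<N. \<not> Q M)" by (rule exists_least_iff[THEN iffD1])
  then obtain N where QN: "\<exists>I h. is_subnetwork V f I h \<and> card I = N \<and> \<not> card (fixed_points I h) \<le> 1"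
    and minN: "\<forall>M<N. \<not> (\<exists>I h. is_subnetwork V f I h \<and> card I = M \<and> \<not> card (fixed_points I h) \<le> 1)"
    unfolding Q_def by blast
  obtain I g where sub: "is_subnetwork V f I g" and cI: "card I = N" and two: "\<not> card (fixed_points I g) \<le> 1"
    using QN by blast
  note b = sub_basic[OF fin sub]
  have min: "card (fixed_points E g') \<le> 1" if "is_subnetwork V f E g'" "card E < card I" for E g'
    using minN that cI by blast
  obtain x z where xz: "x \<in> fixed_points I g" "z \<in> fixed_points I g" "x \<noteq> z"
    using two card_le_Suc0_iff_eq[OF b(4)] by auto
  have fpc: "a \<in> conf I" "g a = a" if "a \<in> fixed_points I g" for a using that by (auto simp: fixed_points_def)
  have comp: "\<forall>v\<in>I. a v \<noteq> c v" if a: "a \<in> fixed_points I g" and c: "c \<in> fixed_points I g" and ac: "a \<noteq> c" for a c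
  proof (rule ccontr)
    assume nc: "\<not> (\<forall>v\<in>I. a v \<noteq> c v)"
    define E where "E = {v\<in>I. c v \<noteq> a v}"
    have EI: "E \<subseteq> I" by (auto simp: E_def)
    have Ene: "E \<noteq> {}" using conf_eq[OF fpc(1)[OF c] fpc(1)[OF a]] ac by (auto simp: E_def)
    have "E \<noteq> I" using nc by (auto simp: E_def)
    then have cEl: "card E < card I" using EI b(1) psubset_card_mono by blast
    define w where "w = (\<lambda>v. v \<notin> E \<and> a v)"
    note r = restr[OF sub EI Ene fpc(1)[OF a]]
    have "\<forall>v. v \<notin> E \<longrightarrow> a v = a v" by simp
    from r(2)[OF this] have aE: "subnet g E w (\<lambda>v. v \<in> E \<and> a v) = (\<lambda>k. k \<in> E \<and> g a k)"
      unfolding w_def .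
    have fa: "(\<lambda>v. v \<in> E \<and> a v) \<in> fixed_points E (subnet g E w)"
      unfolding fixed_points_def using r(3)[of a] aE fpc(2)[OF a] by simp
    have "\<forall>v. v \<notin> E \<longrightarrow> c v = a v" using fpc(1)[OF c] fpc(1)[OF a] by (auto simp: E_def conf_def)
    from r(2)[OF this] have cE: "subnet g E w (\<lambda>v. v \<in> E \<and> c v) = (\<lambda>k. k \<in> E \<and> g c k)"
      unfolding w_def .
    have fc: "(\<lambda>v. v \<in> E \<and> c v) \<in> fixed_points E (subnet g E w)"
      unfolding fixed_points_def using r(3)[of c] cE fpc(2)[OF c] by simp
    have neq: "(\<lambda>v. v \<in> E \<and> a v) \<noteq> (\<lambda>v. v \<in> E \<and> c v)" using Ene by (auto simp: E_def fun_eq_iff)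
    have finF: "finite (fixed_points E (subnet g E w))" using sub_basic[OF fin r(1)] by (simp add: w_def)
    have "\<not> (\<forall>p\<in>fixed_points E (subnet g E w). \<forall>q\<in>fixed_points E (subnet g E w). p = q)"
      using fa fc neq by blast
    then have "\<not> card (fixed_points E (subnet g E w)) \<le> 1"
      using card_le_Suc0_iff_eq[OF finF] by simp
    then show False using min r(1) cEl by (simp add: w_def)
  qed
  have cxz: "\<forall>v\<in>I. x v \<noteq> z v" using comp xz by blast
  have fp: "fixed_points I g = {x, z}"
  proof
    show "fixed_points I g \<subseteq> {x, z}"
    proof
      fix u assume u: "u \<in> fixed_points I g"
      show "u \<in> {x, z}"
      proof (rule ccontr)
        assume "u \<notin> {x, z}"
        then have "\<forall>v\<in>I. x v \<noteq> u v" using comp[OF xz(1) u] by auto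
        then have "z = u" using compl_unique[OF fpc(1)[OF xz(2)] fpc(1)[OF u] cxz] by blast
        then show False using \<open>u \<notin> {x, z}\<close> by simp
      qed
    qed
  next
    show "{x, z} \<subseteq> fixed_points I g" using xz by blast
  qed
  have gne: "non_expansive I g" using subnet_ne[OF fin sub ne] .
  have net: "\<forall>u\<in>conf I. g u \<in> conf I" using b(3) by blast
  obtain \<sigma> where c0: "\<sigma> ` I = I \<and> inj_on \<sigma> I \<and>
     (\<exists>vs. distinct vs \<and> set vs = I \<and>
        {(vs!k, vs!(Suc k mod length vs)) | k. k < length vs} = {(j, \<sigma> j) | j. j \<in> I}) \<and>
     (\<forall>u\<in>conf I. \<forall>j\<in>I. g u (\<sigma> j) = (u j = (x j = x (\<sigma> j))))"
    using core[OF b(1) net gne fpc(1)[OF xz(1)] fpc(1)[OF xz(2)] cxz b(2) fp] by (rule exE)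
  then obtain vs where c: "\<sigma> ` I = I" "inj_on \<sigma> I" "distinct vs" "set vs = I"
      "{(vs!k, vs!(Suc k mod length vs)) | k. k < length vs} = {(j, \<sigma> j) | j. j \<in> I}"
      "\<forall>u\<in>conf I. \<forall>j\<in>I. g u (\<sigma> j) = (u j = (x j = x (\<sigma> j)))"
    by (elim conjE exE) (rule that)
  have "graph_is_hamiltonian_cycle I g \<and> card {(j, i). neg_arc I g j i} = card {j\<in>I. \<not> (x j = x (\<sigma> j))}"
    using circ[OF c] .
  moreover have "even (card {j\<in>I. \<not> (x j = x (\<sigma> j))})" using parity[OF b(1) c(1,2)] .
  ultimately have "positive_circular I g" by (simp add: positive_circular_def)
  then show ?thesis using sub by blast
qed

lemma P2:
  assumes fin: "finite V" and ne: "non_expansive V f"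
    and ex: "\<exists>I h. is_subnetwork V f I h \<and> fixed_points I h = {}"
  shows "\<exists>I h. is_subnetwork V f I h \<and> negative_circular I h"
proof -
  define Q where "Q N = (\<exists>I h. is_subnetwork V f I h \<and> card I = N \<and> fixed_points I h = {})" for N
  have "\<exists>N. Q N" using ex by (auto simp: Q_def)
  then have "\<exists>N. Q N \<and> (\<forall>M<N. \<not> Q M)" by (rule exists_least_iff[THEN iffD1])
  then obtain N where QN: "Q N" and minN: "\<forall>M<N. \<not> Q M" by blast
  obtain I h where sub: "is_subnetwork V f I h" and cI: "card I = N" and nofp: "fixed_points I h = {}"
    using QN unfolding Q_def by blast
  note b = sub_basic[OF fin sub]
  have min: "fixed_points E g' \<noteq> {}" if "is_subnetwork V f E g'" "card E < card I" for E g'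
    using minN that cI unfolding Q_def by blast
  obtain i where iI: "i \<in> I" using b(2) by blast
  have exu: "\<exists>u\<in>conf I. u i = a \<and> h u = u(i := \<not> u i)" for a
  proof -
    have "\<exists>u\<in>conf I. u i = a \<and> (\<forall>j\<in>I-{i}. h u j = u j)"
    proof (cases "I - {i} = {}")
      case True
      have uc: "(\<lambda>v. v = i \<and> a) \<in> conf I" using iI by (auto simp: conf_def)
      show ?thesis using True by (intro bexI[OF _ uc]) auto
    next
      case False
      define w where "w = (\<lambda>v. v = i \<and> a)"
      have wc: "w \<in> conf (I - (I - {i}))" using iI by (auto simp: conf_def w_def)
      have sub': "is_subnetwork V f (I - {i}) (subnet h (I - {i}) w)"
        using subnet_trans[OF sub _ False wc] by blast
      have "card (I - {i}) < card I" using card_Diff1_less[OF b(1) iI] .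
      then have "fixed_points (I - {i}) (subnet h (I - {i}) w) \<noteq> {}" using min[OF sub'] by blast
      then obtain u' where u': "u' \<in> conf (I - {i})" "subnet h (I - {i}) w u' = u'"
        by (auto simp: fixed_points_def)
      define u where "u = mrg (I - {i}) u' w"
      have "u \<in> conf I" using u'(1) iI by (auto simp: u_def mrg_def w_def conf_def)
      moreover have "u i = a" by (simp add: u_def mrg_def w_def)
      moreover have "\<forall>j\<in>I-{i}. h u j = u j"
      proof
        fix j assume j: "j \<in> I - {i}"
        have "subnet h (I - {i}) w u' j = u' j" using u'(2) by simp
        then show "h u j = u j" using j by (simp add: subnet_mrg u_def mrg_def)
      qed
      ultimately show ?thesis by blast
    qed
    then obtain u where u: "u \<in> conf I" "u i = a" "\<forall>j\<in>I-{i}. h u j = u j" by blast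
    have "h u \<noteq> u" using nofp u(1) by (auto simp: fixed_points_def)
    then have "h u = u(i := \<not> u i)" using flip_eq[OF u(1) _ iI u(3)] b(3) by blast
    then show ?thesis using u by blast
  qed
  define R where "R M = (\<exists>D g x z. is_subnetwork V f D g \<and> i \<in> D \<and> card D = M \<and> x \<in> conf D \<and> z \<in> conf D
      \<and> x i \<noteq> z i \<and> g x = x(i := \<not> x i) \<and> g z = z(i := \<not> z i))" for M
  have "R (card I)"
  proof -
    obtain x where x: "x \<in> conf I" "x i = True" "h x = x(i := \<not> x i)" using exu[of True] by blast
    obtain z where z: "z \<in> conf I" "z i = False" "h z = z(i := \<not> z i)" using exu[of False] by blast
    show ?thesis unfolding R_def using sub iI x z by (intro exI[of _ I] exI[of _ h] exI[of _ x] exI[of _ z]) auto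
  qed
  then have "\<exists>M. R M \<and> (\<forall>M'<M. \<not> R M')" by (intro exists_least_iff[THEN iffD1]) blast
  then obtain M where RM: "R M" and minM: "\<forall>M'<M. \<not> R M'" by blast
  obtain D g x z where sD: "is_subnetwork V f D g" and iD: "i \<in> D" and cD: "card D = M"
    and xc: "x \<in> conf D" and zc: "z \<in> conf D" and xzi: "x i \<noteq> z i"
    and gx: "g x = x(i := \<not> x i)" and gz: "g z = z(i := \<not> z i)"
    using RM unfolding R_def by blast
  note bD = sub_basic[OF fin sD]
  have minR: False if "is_subnetwork V f E g'" "i \<in> E" "card E < card D" "a \<in> conf E" "c \<in> conf E"
      "a i \<noteq> c i" "g' a = a(i := \<not> a i)" "g' c = c(i := \<not> c i)" for E g' a c
  proof -
    have "R (card E)" unfolding R_def using that by blast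
    then show False using minM that(3) cD by blast
  qed
  have comp: "\<forall>v\<in>D. a v \<noteq> c v" if ac: "a \<in> conf D" "c \<in> conf D" "a i \<noteq> c i"
    "g a = a(i := \<not> a i)" "g c = c(i := \<not> c i)" for a c
  proof (rule ccontr)
    assume nc: "\<not> (\<forall>v\<in>D. a v \<noteq> c v)"
    define E where "E = {v\<in>D. c v \<noteq> a v}"
    have EI: "E \<subseteq> D" by (auto simp: E_def)
    have iE: "i \<in> E" using iD ac(3) by (auto simp: E_def)
    then have Ene: "E \<noteq> {}" by blast
    have "E \<noteq> D" using nc by (auto simp: E_def)
    then have cEl: "card E < card D" using EI bD(1) psubset_card_mono by blast
    define w where "w = (\<lambda>v. v \<notin> E \<and> a v)"
    note r = restr[OF sD EI Ene ac(1)]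
    have "\<forall>v. v \<notin> E \<longrightarrow> a v = a v" by simp
    from r(2)[OF this] have aE: "subnet g E w (\<lambda>v. v \<in> E \<and> a v) = (\<lambda>k. k \<in> E \<and> g a k)"
      unfolding w_def .
    have "\<forall>v. v \<notin> E \<longrightarrow> c v = a v" using ac(1,2) by (auto simp: E_def conf_def)
    from r(2)[OF this] have cE: "subnet g E w (\<lambda>v. v \<in> E \<and> c v) = (\<lambda>k. k \<in> E \<and> g c k)"
      unfolding w_def .
    have a2: "subnet g E w (\<lambda>v. v \<in> E \<and> a v) = (\<lambda>v. v \<in> E \<and> a v)(i := \<not> (i \<in> E \<and> a i))"
      unfolding aE ac(4) using iE by (auto simp: fun_eq_iff)
    have c2: "subnet g E w (\<lambda>v. v \<in> E \<and> c v) = (\<lambda>v. v \<in> E \<and> c v)(i := \<not> (i \<in> E \<and> c i))"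
      unfolding cE ac(5) using iE by (auto simp: fun_eq_iff)
    have "(i \<in> E \<and> a i) \<noteq> (i \<in> E \<and> c i)" using iE ac(3) by simp
    then show False using minR[OF r(1)[folded w_def] iE cEl r(3) r(3)] a2 c2 by simp
  qed
  have cxz: "\<forall>v\<in>D. x v \<noteq> z v" using comp[OF xc zc xzi gx gz] .
  define F where "F u = (g u)(i := \<not> g u i)" for u
  have Fiff: "F u = u \<longleftrightarrow> g u = u(i := \<not> u i)" for u
  proof
    assume "F u = u"
    then have "\<forall>v. F u v = u v" by simp
    then show "g u = u(i := \<not> u i)" unfolding F_def by (auto simp: fun_eq_iff split: if_splits)
  next
    assume "g u = u(i := \<not> u i)"
    then show "F u = u" unfolding F_def by (auto simp: fun_eq_iff)
  qed
  have fpF: "fixed_points D F = {x, z}"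
  proof
    show "fixed_points D F \<subseteq> {x, z}"
    proof
      fix u assume "u \<in> fixed_points D F"
      then have u: "u \<in> conf D" "g u = u(i := \<not> u i)" using Fiff by (auto simp: fixed_points_def)
      show "u \<in> {x, z}"
      proof (cases "u i = x i")
        case True
        then have "u i \<noteq> z i" using xzi by simp
        then have "\<forall>v\<in>D. u v \<noteq> z v" using comp[OF u(1) zc _ u(2) gz] by blast
        then have "\<forall>v\<in>D. z v \<noteq> u v" by auto
        moreover have "\<forall>v\<in>D. z v \<noteq> x v" using cxz by auto
        ultimately have "u = x" using compl_unique[OF u(1) xc] by blast
        then show ?thesis by simp
      next
        case False
        then have "\<forall>v\<in>D. u v \<noteq> x v" using comp[OF u(1) xc _ u(2) gx] by blast
        then have "\<forall>v\<in>D. x v \<noteq> u v" by auto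
        then have "u = z" using compl_unique[OF u(1) zc _ cxz] by blast
        then show ?thesis by simp
      qed
    qed
  next
    show "{x, z} \<subseteq> fixed_points D F" using Fiff gx gz xc zc by (auto simp: fixed_points_def)
  qed
  have Fnet: "\<forall>u\<in>conf D. F u \<in> conf D" using bD(3) iD by (auto simp: F_def conf_upd)
  have gne: "non_expansive D g" using subnet_ne[OF fin sD ne] .
  have Fne: "non_expansive D F"
    unfolding non_expansive_def
  proof (intro ballI)
    fix a c assume "a \<in> conf D" "c \<in> conf D"
    then have "hamming D (g a) (g c) \<le> hamming D a c" using gne by (auto simp: non_expansive_def)
    moreover have "{v\<in>D. F a v \<noteq> F c v} = {v\<in>D. g a v \<noteq> g c v}" by (auto simp: F_def)
    ultimately show "hamming D (F a) (F c) \<le> hamming D a c" by (simp add: hamming_def)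
  qed
  obtain \<sigma> where c0: "\<sigma> ` D = D \<and> inj_on \<sigma> D \<and>
     (\<exists>vs. distinct vs \<and> set vs = D \<and>
        {(vs!k, vs!(Suc k mod length vs)) | k. k < length vs} = {(j, \<sigma> j) | j. j \<in> D}) \<and>
     (\<forall>u\<in>conf D. \<forall>j\<in>D. F u (\<sigma> j) = (u j = (x j = x (\<sigma> j))))"
    using core[OF bD(1) Fnet Fne xc zc cxz bD(2) fpF] by (rule exE)
  then obtain vs where c: "\<sigma> ` D = D" "inj_on \<sigma> D" "distinct vs" "set vs = D"
      "{(vs!k, vs!(Suc k mod length vs)) | k. k < length vs} = {(j, \<sigma> j) | j. j \<in> D}"
      and Fform: "\<forall>u\<in>conf D. \<forall>j\<in>D. F u (\<sigma> j) = (u j = (x j = x (\<sigma> j)))"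
    by (elim conjE exE) (rule that)
  obtain j0 where j0: "j0 \<in> D" "\<sigma> j0 = i" using c(1) iD by (metis imageE)
  define s' where "s' j = ((x j = x (\<sigma> j)) = (j \<noteq> j0))" for j
  have gform: "\<forall>u\<in>conf D. \<forall>j\<in>D. g u (\<sigma> j) = (u j = s' j)"
  proof (intro ballI)
    fix u j assume u: "u \<in> conf D" and j: "j \<in> D"
    show "g u (\<sigma> j) = (u j = s' j)"
    proof (cases "j = j0")
      case True
      have "F u i = (\<not> g u i)" by (simp add: F_def)
      moreover have "F u i = (u j0 = (x j0 = x (\<sigma> j0)))" using Fform u j0 by metis
      ultimately show ?thesis using True j0 by (auto simp: s'_def)
    next
      case False
      then have "\<sigma> j \<noteq> i" using j0 c(2) j by (metis inj_on_eq_iff)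
      then have "F u (\<sigma> j) = g u (\<sigma> j)" by (simp add: F_def)
      then show ?thesis using Fform u j False by (simp add: s'_def)
    qed
  qed
  have cc: "graph_is_hamiltonian_cycle D g \<and> card {(j, i). neg_arc D g j i} = card {j\<in>D. \<not> s' j}"
    using circ[OF c(1-5) gform] .
  define A where "A = {j\<in>D. \<not> (x j = x (\<sigma> j))}"
  have evA: "even (card A)" unfolding A_def using parity[OF bD(1) c(1,2)] .
  have finA: "finite A" using bD(1) by (simp add: A_def)
  have "odd (card {j\<in>D. \<not> s' j})"
  proof (cases "j0 \<in> A")
    case True
    then have "{j\<in>D. \<not> s' j} = A - {j0}" by (auto simp: A_def s'_def)
    moreover have "card A > 0" using True finA card_gt_0_iff by blast
    moreover have "card (A - {j0}) = card A - 1" using True finA by (simp add: card_Diff_singleton)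
    ultimately show ?thesis using evA by simp
  next
    case False
    then have "{j\<in>D. \<not> s' j} = insert j0 A" using j0(1) by (auto simp: A_def s'_def)
    then show ?thesis using False finA evA by simp
  qed
  then have "negative_circular D g" using cc by (simp add: negative_circular_def)
  then show ?thesis using sD by blast
qed

theorem corollary7:
  fixes V :: "'v set" and f :: "('v \<Rightarrow> bool) \<Rightarrow> ('v \<Rightarrow> bool)"
  assumes "finite V" and "V \<noteq> {}"
    and "is_network V f"
    and "non_expansive V f"
  shows "((\<forall>I h. is_subnetwork V f I h \<longrightarrow> card (fixed_points I h) \<le> 1) \<longleftrightarrow>
            \<not> (\<exists>I h. is_subnetwork V f I h \<and> positive_circular I h))
       \<and> ((\<forall>I h. is_subnetwork V f I h \<longrightarrow> fixed_points I h \<noteq> {}) \<longleftrightarrow>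
            \<not> (\<exists>I h. is_subnetwork V f I h \<and> negative_circular I h))"
proof (intro conjI iffI)
  show "\<not> (\<exists>I h. is_subnetwork V f I h \<and> positive_circular I h)"
    if "\<forall>I h. is_subnetwork V f I h \<longrightarrow> card (fixed_points I h) \<le> 1"
    using that pos2[OF assms(1)] by blast
  show "\<forall>I h. is_subnetwork V f I h \<longrightarrow> card (fixed_points I h) \<le> 1"
    if "\<not> (\<exists>I h. is_subnetwork V f I h \<and> positive_circular I h)"
    using that P1[OF assms(1) assms(4)] by blast
  show "\<not> (\<exists>I h. is_subnetwork V f I h \<and> negative_circular I h)"
    if "\<forall>I h. is_subnetwork V f I h \<longrightarrow> fixed_points I h \<noteq> {}"
    using that neg0[OF assms(1)] by blast
  show "\<forall>I h. is_subnetwork V f I h \<longrightarrow> fixed_points I h \<noteq> {}"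
    if "\<not> (\<exists>I h. is_subnetwork V f I h \<and> negative_circular I h)"
    using that P2[OF assms(1) assms(4)] by blast
qed


end
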